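(* For every integer $N\ge1$, $u\in\mathbb{C}$ and $\tau$ with $\operatorname{Im}\tau>0$, $$(-i)^{N+1}e^{-\pi i(N-1)u}q^{\frac{(N-1)^2}{8N}}R\!\left(u;\tfrac\tau N\right)=\sum_{k=0}^{N-1}(-1)^ke^{-2\pi iku}q^{-\frac{k(k-N+1)}{2N}}R\!\left(Nu+k\tau-\tfrac{N-1}{2}\tau+\tfrac{N+1}{2};N\tau\right).$$
   Context: $q=e^{2\pi i\tau}$, $q^c:=e^{2\pi ic\tau}$. $E(x)=2\int_0^xe^{-\pi z^2}dz$. For $w\in\mathbb{C}$ and $\sigma$ with $\operatorname{Im}\sigma>0$, with $t=\operatorname{Im}\sigma$ and $a=\operatorname{Im}w/\operatorname{Im}\sigma$: $R(w;\sigma)=\sum_{\nu\in\mathbb{Z}+1/2}\{\operatorname{sgn}(\nu)-E((\nu+a)\sqrt{2t})\}(-1)^{\nu-1/2}e^{-2\pi i\nu w}e^{-\pi i\nu^2\sigma}$. *)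

theory Defs
  imports "HOL-Analysis.Analysis"
begin

definition Efun :: "real \<Rightarrow> real" where
  "Efun x = 2 * (if 0 \<le> x then integral {0..x} (\<lambda>z. exp (- pi * z\<^sup>2))
                  else - integral {x..0} (\<lambda>z. exp (- pi * z\<^sup>2)))"

definition qpow :: "complex \<Rightarrow> real \<Rightarrow> complex" where
  "qpow \<tau> c = exp (2 * pi * \<i> * of_real c * \<tau>)"

definition Rfun :: "complex \<Rightarrow> complex \<Rightarrow> complex" where
  "Rfun w \<sigma> =
     (let t = Im \<sigma>; a = Im w / Im \<sigma> in
      (\<Sum>\<^sub>\<infinity> n::int.
         (let \<nu> = real_of_int n + 1/2 in
           of_real (sgn \<nu> - Efun ((\<nu> + a) * sqrt (2 * t)))
           * (-1) powi n
           * exp (- 2 * pi * \<i> * of_real \<nu> * w)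
           * exp (- pi * \<i> * of_real (\<nu>\<^sup>2) * \<sigma>))))"

end

theory Submission imports Defs "HOL-Probability.Distributions" begin

lemma gauss_half:
  "integrable lborel (\<lambda>z::real. indicator {0..} z * exp (- pi * z\<^sup>2))"
  "(\<integral>z. indicator {0..} z * exp (- pi * z\<^sup>2) \<partial>lborel) = 1/2"
proof -
  let ?phi = "\<lambda>x::real. indicator {0..} x *\<^sub>R exp (- x\<^sup>2)"
  have i: "integrable lborel ?phi" and v: "integral\<^sup>L lborel ?phi = sqrt pi / 2"
    using gaussian_moment_0 unfolding has_bochner_integral_iff by auto
  have eq: "(\<lambda>x. ?phi (0 + sqrt pi * x)) = (\<lambda>z. indicator {0..} z * exp (- pi * z\<^sup>2))"
  proof
    fix x :: real
    have "indicator {0..} (sqrt pi * x) = (indicator {0..} x :: real)"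
      by (auto simp: indicator_def zero_le_mult_iff) (use pi_gt_zero in linarith)
    moreover have "(sqrt pi * x)\<^sup>2 = pi * x\<^sup>2" by (simp add: power_mult_distrib)
    ultimately show "?phi (0 + sqrt pi * x) = indicator {0..} x * exp (- pi * x\<^sup>2)" by simp
  qed
  have "sqrt pi \<noteq> 0" by simp
  from lborel_integrable_real_affine[OF i this, of 0] eq
  show "integrable lborel (\<lambda>z::real. indicator {0..} z * exp (- pi * z\<^sup>2))" by simp
  from lborel_integral_real_affine[OF \<open>sqrt pi \<noteq> 0\<close>, of ?phi 0] eq v
  have "sqrt pi / 2 = sqrt pi * (\<integral>z. indicator {0..} z * exp (- pi * z\<^sup>2) \<partial>lborel)" by simp
  then show "(\<integral>z. indicator {0..} z * exp (- pi * z\<^sup>2) \<partial>lborel) = 1/2" by simp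
qed

lemma gauss_tail:
  fixes x :: real assumes x: "0 \<le> x"
  shows "0 \<le> 1/2 - integral {0..x} (\<lambda>z. exp (- pi * z\<^sup>2))"
    and "1/2 - integral {0..x} (\<lambda>z. exp (- pi * z\<^sup>2)) \<le> exp (- pi * x\<^sup>2) / 2"
proof -
  let ?h = "\<lambda>z::real. exp (- pi * z\<^sup>2)"
  have I0: "integrable lborel (\<lambda>z::real. indicator {0..} z * ?h z)" using gauss_half(1) .
  have m1: "(\<lambda>z::real. indicator {0..x} z * ?h z) \<in> borel_measurable lborel" by measurable
  have m2: "(\<lambda>z::real. indicator {x<..} z * ?h z) \<in> borel_measurable lborel" by measurable
  have I1: "integrable lborel (\<lambda>z::real. indicator {0..x} z * ?h z)"
    by (rule Bochner_Integration.integrable_bound[OF I0 m1]) (auto simp: indicator_def)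
  have I2: "integrable lborel (\<lambda>z::real. indicator {x<..} z * ?h z)"
    by (rule Bochner_Integration.integrable_bound[OF I0 m2]) (use x in \<open>auto simp: indicator_def\<close>)
  have split: "(\<lambda>z::real. indicator {0..} z * ?h z) = (\<lambda>z. indicator {0..x} z * ?h z + indicator {x<..} z * ?h z)"
    using x by (auto simp: indicator_def fun_eq_iff)
  have hk: "integral {0..x} ?h = (\<integral>z. indicator {0..x} z * ?h z \<partial>lborel)"
    using set_borel_integral_eq_integral(2)[of "{0..x}" ?h] I1
    by (simp add: set_integrable_def set_lebesgue_integral_def)
  have sum: "1/2 = integral {0..x} ?h + (\<integral>z. indicator {x<..} z * ?h z \<partial>lborel)"
    using gauss_half(2) unfolding split hk by (subst (asm) Bochner_Integration.integral_add[OF I1 I2]) simp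
  have nn: "0 \<le> (\<integral>z. indicator {x<..} z * ?h z \<partial>lborel)"
    by (rule Bochner_Integration.integral_nonneg) (simp add: indicator_def)
  show "0 \<le> 1/2 - integral {0..x} ?h" using sum nn by linarith
  have sh: "(\<integral>z. indicator {x<..} z * ?h z \<partial>lborel) = (\<integral>s. indicator {x<..} (x + 1 * s) * ?h (x + 1 * s) \<partial>lborel)"
    using lborel_integral_real_affine[of 1 "\<lambda>z. indicator {x<..} z * ?h z" x] by simp
  have I3: "integrable lborel (\<lambda>s. indicator {x<..} (x + 1 * s) * ?h (x + 1 * s))"
    using lborel_integrable_real_affine[OF I2, of 1 x] by simp
  have I4: "integrable lborel (\<lambda>s::real. exp (- pi * x\<^sup>2) * (indicator {0..} s * ?h s))"
    using I0 by simp
  have le: "indicator {x<..} (x + 1 * s) * ?h (x + 1 * s) \<le> exp (- pi * x\<^sup>2) * (indicator {0..} s * ?h s)" for s :: real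
  proof (cases "0 < s")
    case True
    have "- pi * (x + s)\<^sup>2 \<le> - pi * x\<^sup>2 + - pi * s\<^sup>2"
      using x True pi_gt_zero by (simp add: power2_eq_square algebra_simps)
    then have "?h (x + s) \<le> exp (- pi * x\<^sup>2) * ?h s" by (simp add: exp_add[symmetric])
    then show ?thesis using True by (simp add: indicator_def)
  qed (simp add: indicator_def)
  have "(\<integral>s. indicator {x<..} (x + 1 * s) * ?h (x + 1 * s) \<partial>lborel) \<le> (\<integral>s. exp (- pi * x\<^sup>2) * (indicator {0..} s * ?h s) \<partial>lborel)"
    by (rule Bochner_Integration.integral_mono[OF I3 I4 le])
  also have "\<dots> = exp (- pi * x\<^sup>2) / 2" using gauss_half(2) by simp
  finally show "1/2 - integral {0..x} ?h \<le> exp (- pi * x\<^sup>2) / 2" using sum sh by linarith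
qed

lemma Efun_nonneg_eq: "0 \<le> x \<Longrightarrow> Efun x = 2 * integral {0..x} (\<lambda>z. exp (- pi * z\<^sup>2))"
  by (simp add: Efun_def)

lemma Efun_neg_eq: "x < 0 \<Longrightarrow> Efun x = - 2 * integral {0..-x} (\<lambda>z. exp (- pi * z\<^sup>2))"
proof -
  assume x: "x < 0"
  have e: "(\<lambda>z::real. exp (- pi * (- z)\<^sup>2)) = (\<lambda>z. exp (- pi * z\<^sup>2))" by simp
  have "integral {x..0} (\<lambda>z. exp (- pi * z\<^sup>2)) = integral {0..-x} (\<lambda>z. exp (- pi * z\<^sup>2))"
    using Henstock_Kurzweil_Integration.integral_reflect_real[of 0 x "\<lambda>z. exp (- pi * z\<^sup>2)"] unfolding e minus_zero by (rule sym)
  then show ?thesis using x by (simp add: Efun_def)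
qed

lemma Efun_bounds:
  fixes x :: real
  shows "\<bar>Efun x\<bar> \<le> 1" and "x \<noteq> 0 \<Longrightarrow> \<bar>sgn x - Efun x\<bar> \<le> exp (- pi * x\<^sup>2)"
proof -
  have g0: "0 \<le> integral {0..y} (\<lambda>z. exp (- pi * z\<^sup>2))" if "0 \<le> y" for y :: real
    by (rule integral_nonneg) (auto intro!: integrable_continuous_interval continuous_intros)
  show "\<bar>Efun x\<bar> \<le> 1"
  proof (cases "0 \<le> x")
    case True then show ?thesis using gauss_tail(1)[OF True] g0[OF True] Efun_nonneg_eq[OF True] by simp
  next
    case False then have t: "0 \<le> -x" by simp
    then show ?thesis using gauss_tail(1)[OF t] g0[OF t] Efun_neg_eq[of x] False by simp
  qed
  assume "x \<noteq> 0"
  show "\<bar>sgn x - Efun x\<bar> \<le> exp (- pi * x\<^sup>2)"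
  proof (cases "0 < x")
    case True then have t: "0 \<le> x" by simp
    show ?thesis using gauss_tail[OF t] Efun_nonneg_eq[OF t] True by simp
  next
    case False then have t: "0 \<le> -x" and "x < 0" using \<open>x \<noteq> 0\<close> by auto
    show ?thesis using gauss_tail[OF t] Efun_neg_eq[OF \<open>x < 0\<close>] \<open>x < 0\<close> by simp
  qed
qed

lemma geom_int_summable:
  fixes r :: real assumes r: "0 \<le> r" "r < 1"
  shows "(\<lambda>n::int. r ^ nat \<bar>n\<bar>) summable_on UNIV"
proof -
  have g: "(\<lambda>n::nat. r ^ n) summable_on UNIV"
    by (rule norm_summable_imp_summable_on) (use r in \<open>simp add: summable_geometric\<close>)
  have A: "(\<lambda>n::int. r ^ nat \<bar>n\<bar>) summable_on (int ` UNIV)"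
    by (subst summable_on_reindex) (use g in \<open>auto simp: o_def\<close>)
  have B: "(\<lambda>n::int. r ^ nat \<bar>n\<bar>) summable_on ((\<lambda>n. - int n) ` UNIV)"
    by (subst summable_on_reindex) (use g in \<open>auto simp: o_def inj_on_def\<close>)
  have U: "int ` UNIV \<union> (\<lambda>n. - int n) ` UNIV = (UNIV :: int set)"
  proof -
    have "x \<in> int ` UNIV \<union> (\<lambda>n. - int n) ` UNIV" for x :: int
    proof (cases "0 \<le> x")
      case True then show ?thesis by (auto intro!: image_eqI[of x int "nat x"])
    next
      case False then show ?thesis by (auto intro!: image_eqI[of x "\<lambda>n. - int n" "nat (-x)"])
    qed
    then show ?thesis by auto
  qed
  from summable_on_union[OF A B] show ?thesis unfolding U .
qed

definition rt :: "complex \<Rightarrow> complex \<Rightarrow> int \<Rightarrow> complex" where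
  "rt w \<sigma> n = (let t = Im \<sigma>; a = Im w / Im \<sigma>; \<nu> = real_of_int n + 1/2 in
           of_real (sgn \<nu> - Efun ((\<nu> + a) * sqrt (2 * t)))
           * (-1) powi n
           * exp (- 2 * pi * \<i> * of_real \<nu> * w)
           * exp (- pi * \<i> * of_real (\<nu>\<^sup>2) * \<sigma>))"

lemma Rfun_rt: "Rfun w \<sigma> = infsum (rt w \<sigma>) UNIV"
  unfolding Rfun_def rt_def Let_def ..

lemma sgnE_bound:
  fixes \<nu> a t :: real assumes t: "0 < t" and nu: "\<nu> \<noteq> 0"
  shows "\<bar>sgn \<nu> - Efun ((\<nu> + a) * sqrt (2 * t))\<bar> \<le> 2 * exp (2 * pi * t * a\<^sup>2) * exp (- pi * (2 * t * (\<nu> + a)\<^sup>2))"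
proof -
  let ?X = "(\<nu> + a) * sqrt (2 * t)"
  have X2: "?X\<^sup>2 = 2 * t * (\<nu> + a)\<^sup>2" using t by (simp add: power_mult_distrib)
  have e1: "1 \<le> exp (2 * pi * t * a\<^sup>2)" using t pi_gt_zero by simp
  show ?thesis
  proof (cases "sgn (\<nu> + a) = sgn \<nu> \<and> \<nu> + a \<noteq> 0")
    case True
    have sX: "sgn ?X = sgn \<nu>" using True t by (simp add: sgn_mult)
    have "?X \<noteq> 0" using True t by simp
    from Efun_bounds(2)[OF this] sX X2 have "\<bar>sgn \<nu> - Efun ?X\<bar> \<le> exp (- pi * (2 * t * (\<nu> + a)\<^sup>2))" by simp
    also have "\<dots> \<le> 2 * exp (2 * pi * t * a\<^sup>2) * exp (- pi * (2 * t * (\<nu> + a)\<^sup>2))"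
    proof -
      have two: "1 \<le> 2 * exp (2 * pi * t * a\<^sup>2)" using e1 by linarith
      show ?thesis using mult_right_mono[OF two, of "exp (- pi * (2 * t * (\<nu> + a)\<^sup>2))"] by simp
    qed
    finally show ?thesis .
  next
    case False
    have sq: "(\<nu> + a)\<^sup>2 \<le> a\<^sup>2"
    proof -
      have "\<bar>\<nu> + a\<bar> \<le> \<bar>a\<bar>" using False nu by (cases "\<nu> > 0"; cases "\<nu> + a > 0"; cases "\<nu> + a = 0") (auto simp: sgn_if)
      then show ?thesis by (metis abs_ge_zero power2_abs power_mono)
    qed
    have "- pi * (2 * t * a\<^sup>2) \<le> - pi * (2 * t * (\<nu> + a)\<^sup>2)"
      using sq t pi_gt_zero by (simp add: mult_left_mono)
    then have "exp (- pi * (2 * t * a\<^sup>2)) \<le> exp (- pi * (2 * t * (\<nu> + a)\<^sup>2))" by simp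
    then have "1 \<le> exp (2 * pi * t * a\<^sup>2) * exp (- pi * (2 * t * (\<nu> + a)\<^sup>2))"
    proof -
      have "1 = exp (2 * pi * t * a\<^sup>2) * exp (- pi * (2 * t * a\<^sup>2))"
        by (simp add: exp_add[symmetric])
      also have "\<dots> \<le> exp (2 * pi * t * a\<^sup>2) * exp (- pi * (2 * t * (\<nu> + a)\<^sup>2))"
        by (rule mult_left_mono[OF \<open>exp (- pi * (2 * t * a\<^sup>2)) \<le> _\<close>]) simp
      finally show ?thesis .
    qed
    moreover have "\<bar>sgn \<nu> - Efun ?X\<bar> \<le> 2"
      using Efun_bounds(1)[of ?X] by (auto simp: sgn_if)
    ultimately show ?thesis by linarith
  qed
qed

lemma rt_norm_bound:
  assumes s: "0 < Im \<sigma>"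
  shows "norm (rt w \<sigma> n) \<le> 2 * exp (2 * pi * Im \<sigma> * (Im w / Im \<sigma>)\<^sup>2)
           * exp (- pi * Im \<sigma> * (real_of_int n + 1/2 + Im w / Im \<sigma>)\<^sup>2)"
proof -
  define t where "t = Im \<sigma>"
  define a where "a = Im w / Im \<sigma>"
  define \<nu> where "\<nu> = real_of_int n + 1/2"
  define K where "K = 2 * exp (2 * pi * t * a\<^sup>2)"
  have t: "0 < t" using s t_def by simp
  have Imw: "Im w = a * t" using t by (simp add: a_def t_def)
  have nu: "\<nu> \<noteq> 0"
  proof
    assume "\<nu> = 0" then have "2 * real_of_int n = -1" by (simp add: \<nu>_def)
    then have "2 * n = -1" by linarith
    then show False by presburger
  qed
  have n1: "norm ((-1::complex) powi n) = 1" by (simp add: norm_power_int)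
  have n2: "norm (exp (- 2 * pi * \<i> * of_real \<nu> * w)) = exp (2 * pi * \<nu> * Im w)"
    by (simp add: norm_exp_eq_Re)
  have n3: "norm (exp (- pi * \<i> * of_real (\<nu>\<^sup>2) * \<sigma>)) = exp (pi * \<nu>\<^sup>2 * t)"
    by (simp add: norm_exp_eq_Re t_def)
  have "norm (rt w \<sigma> n) = \<bar>sgn \<nu> - Efun ((\<nu> + a) * sqrt (2 * t))\<bar> * exp (2 * pi * \<nu> * Im w) * exp (pi * \<nu>\<^sup>2 * t)"
    unfolding rt_def Let_def a_def[symmetric] t_def[symmetric] \<nu>_def[symmetric]
    by (simp only: norm_mult n1 n2 n3 norm_of_real mult_1_right a_def t_def)
  also have "\<dots> \<le> (K * exp (- pi * (2 * t * (\<nu> + a)\<^sup>2))) * exp (2 * pi * \<nu> * Im w) * exp (pi * \<nu>\<^sup>2 * t)"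
    using sgnE_bound[OF t nu, of a] unfolding K_def by (simp add: mult_right_mono)
  also have "\<dots> = K * exp (- pi * t * (\<nu> + a)\<^sup>2 - pi * t * a\<^sup>2)"
  proof -
    have "exp (- pi * (2 * t * (\<nu> + a)\<^sup>2)) * exp (2 * pi * \<nu> * (a * t)) * exp (pi * \<nu>\<^sup>2 * t)
        = exp (- pi * (2 * t * (\<nu> + a)\<^sup>2) + 2 * pi * \<nu> * (a * t) + pi * \<nu>\<^sup>2 * t)"
      by (simp only: exp_add)
    also have "- pi * (2 * t * (\<nu> + a)\<^sup>2) + 2 * pi * \<nu> * (a * t) + pi * \<nu>\<^sup>2 * t = - pi * t * (\<nu> + a)\<^sup>2 - pi * t * a\<^sup>2"
      by (simp add: power2_eq_square algebra_simps)
    finally show ?thesis unfolding Imw by (simp add: mult.assoc)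
  qed
  also have "\<dots> \<le> K * exp (- pi * t * (\<nu> + a)\<^sup>2)"
    using t pi_gt_zero unfolding K_def by (simp add: mult_left_mono)
  finally show ?thesis unfolding K_def t_def a_def \<nu>_def .
qed

lemma gauss_geom_bound:
  fixes t b :: real assumes t: "0 < t"
  shows "exp (- pi * t * (real_of_int n + b)\<^sup>2) \<le> exp (pi * t + 2 * pi * t * \<bar>b\<bar>) * exp (- 2 * pi * t) ^ nat \<bar>n\<bar>"
proof -
  let ?y = "real_of_int n + b"
  have h1: "- (?y\<^sup>2) \<le> 1 - 2 * \<bar>?y\<bar>"
    using power2_abs[of ?y] by (smt (verit) zero_le_power2 power2_diff[of "\<bar>?y\<bar>" 1] power_one)
  have h2: "\<bar>real_of_int n\<bar> - \<bar>b\<bar> \<le> \<bar>?y\<bar>" by linarith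
  have lin: "\<And>q Y M B :: real. - q \<le> 1 - 2 * Y \<Longrightarrow> M - B \<le> Y \<Longrightarrow> - q \<le> 1 + 2 * B - 2 * M"
    by linarith
  have "- (?y\<^sup>2) \<le> 1 + 2 * \<bar>b\<bar> - 2 * \<bar>real_of_int n\<bar>" by (rule lin[OF h1 h2])
  then have "pi * t * (- (?y\<^sup>2)) \<le> pi * t * (1 + 2 * \<bar>b\<bar> - 2 * \<bar>real_of_int n\<bar>)"
    using t pi_gt_zero by (intro mult_left_mono) auto
  then have "exp (- pi * t * ?y\<^sup>2) \<le> exp (pi * t + 2 * pi * t * \<bar>b\<bar> + real (nat \<bar>n\<bar>) * (- 2 * pi * t))"
    by (simp add: algebra_simps)
  also have "\<dots> = exp (pi * t + 2 * pi * t * \<bar>b\<bar>) * exp (- 2 * pi * t) ^ nat \<bar>n\<bar>"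
    by (simp only: exp_add exp_of_nat_mult)
  finally show ?thesis .
qed

lemma rt_summable:
  assumes s: "0 < Im \<sigma>"
  shows "rt w \<sigma> summable_on UNIV"
proof -
  define t where "t = Im \<sigma>"
  have t: "0 < t" using s t_def by simp
  define C where "C = 2 * exp (2 * pi * Im \<sigma> * (Im w / Im \<sigma>)\<^sup>2) * exp (pi * t + 2 * pi * t * \<bar>1/2 + Im w / Im \<sigma>\<bar>)"
  have r: "0 \<le> exp (- 2 * pi * t)" "exp (- 2 * pi * t) < 1" using t pi_gt_zero by auto
  have sm: "(\<lambda>n::int. C * exp (- 2 * pi * t) ^ nat \<bar>n\<bar>) summable_on UNIV"
    by (rule summable_on_cmult_right[OF geom_int_summable[OF r]])
  have "(\<lambda>n. norm (rt w \<sigma> n)) summable_on UNIV"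
  proof (rule summable_on_comparison_test[OF sm])
    fix n :: int
    have "norm (rt w \<sigma> n) \<le> 2 * exp (2 * pi * Im \<sigma> * (Im w / Im \<sigma>)\<^sup>2)
           * exp (- pi * t * (real_of_int n + (1/2 + Im w / Im \<sigma>))\<^sup>2)"
      using rt_norm_bound[OF s, of w n] by (simp add: t_def add.assoc)
    also have "\<dots> \<le> 2 * exp (2 * pi * Im \<sigma> * (Im w / Im \<sigma>)\<^sup>2) * (exp (pi * t + 2 * pi * t * \<bar>1/2 + Im w / Im \<sigma>\<bar>) * exp (- 2 * pi * t) ^ nat \<bar>n\<bar>)"
      by (rule mult_left_mono[OF gauss_geom_bound[OF t]]) simp
    finally show "norm (rt w \<sigma> n) \<le> C * exp (- 2 * pi * t) ^ nat \<bar>n\<bar>" by (simp add: C_def mult.assoc)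
  qed simp
  then show ?thesis using summable_on_iff_abs_summable_on_complex by blast
qed

lemma minus_i_exp: "- \<i> = exp (- (of_real pi * \<i>) / 2)"
proof -
  have "exp (- (of_real pi * \<i>) / 2) = exp (\<i> * complex_of_real (- pi / 2))" by (simp add: field_simps)
  also have "\<dots> = cis (- pi / 2)" by (simp add: cis_conv_exp)
  also have "\<dots> = - \<i>" by (simp add: complex_eq_iff)
  finally show ?thesis by simp
qed

lemma neg1_powi: "(-1::complex) powi j = exp (of_int j * (of_real pi * \<i>))"
  using exp_power_int[of "of_real pi * \<i>" j] by simp

lemma expo_id:
  fixes Nc k m u \<tau> p :: complex assumes N: "Nc \<noteq> 0"
  shows "(Nc+1) * (-(p*\<i>)/2) + (-p*\<i>*(Nc-1)*u) + 2*p*\<i>*((Nc-1)\<^sup>2/(8*Nc))*\<tau> + (Nc*m+k)*(p*\<i>)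
     + (-2*p*\<i>*(Nc*m+k+1/2)*u) + (-p*\<i>*(Nc*m+k+1/2)\<^sup>2*(\<tau>/Nc))
   = k*(p*\<i>) + (-2*p*\<i>*k*u) + 2*p*\<i>*(-(k*(k-Nc+1))/(2*Nc))*\<tau> + m*(p*\<i>)
     + (-2*p*\<i>*(m+1/2)*(Nc*u + k*\<tau> - (Nc-1)/2*\<tau> + (Nc+1)/2)) + (-p*\<i>*(m+1/2)\<^sup>2*(Nc*\<tau>))
     + \<i>*((Nc*m)*(p*2))"
  using N by (simp add: field_simps power2_eq_square)

lemma key_exp:
  fixes N k :: nat and m :: int and u \<tau> :: complex
  assumes N: "N \<ge> 1"
  defines "n \<equiv> int N * m + int k"
  shows "((- \<i>) ^ (N + 1) * exp (- pi * \<i> * (of_nat N - 1) * u)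
           * qpow \<tau> ((real N - 1)\<^sup>2 / (8 * real N)))
         * ((-1) powi n * exp (- 2 * pi * \<i> * of_real (real_of_int n + 1/2) * u)
            * exp (- pi * \<i> * of_real ((real_of_int n + 1/2)\<^sup>2) * (\<tau> / of_nat N)))
       = ((-1) ^ k * exp (- 2 * pi * \<i> * of_nat k * u)
              * qpow \<tau> (- (real k * (real k - real N + 1)) / (2 * real N)))
         * ((-1) powi m * exp (- 2 * pi * \<i> * of_real (real_of_int m + 1/2)
               * (of_nat N * u + of_nat k * \<tau> - (of_nat N - 1) / 2 * \<tau> + (of_nat N + 1) / 2))
            * exp (- pi * \<i> * of_real ((real_of_int m + 1/2)\<^sup>2) * (of_nat N * \<tau>)))"
proof -
  define Nc :: complex where "Nc = of_nat N"
  define kc :: complex where "kc = of_nat k"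
  define mc :: complex where "mc = of_int m"
  define p :: complex where "p = of_real pi"
  have Nc: "Nc \<noteq> 0" using N by (simp add: Nc_def)
  have i1: "(- \<i>) ^ (N + 1) = exp ((Nc+1) * (-(p*\<i>)/2))"
    unfolding minus_i_exp exp_of_nat_mult[symmetric] by (simp add: Nc_def p_def add.commute)
  have i2: "(-1::complex) ^ k = exp (kc * (p*\<i>))"
    unfolding kc_def p_def exp_of_nat_mult exp_pi_i ..
  have LA: "((- \<i>) ^ (N + 1) * exp (- pi * \<i> * (of_nat N - 1) * u)
           * qpow \<tau> ((real N - 1)\<^sup>2 / (8 * real N)))
         * ((-1) powi n * exp (- 2 * pi * \<i> * of_real (real_of_int n + 1/2) * u)
            * exp (- pi * \<i> * of_real ((real_of_int n + 1/2)\<^sup>2) * (\<tau> / of_nat N)))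
       = exp ((Nc+1) * (-(p*\<i>)/2) + (-p*\<i>*(Nc-1)*u) + 2*p*\<i>*((Nc-1)\<^sup>2/(8*Nc))*\<tau> + (Nc*mc+kc)*(p*\<i>)
     + (-2*p*\<i>*(Nc*mc+kc+1/2)*u) + (-p*\<i>*(Nc*mc+kc+1/2)\<^sup>2*(\<tau>/Nc)))"
    unfolding i1 neg1_powi qpow_def exp_add
    by (simp add: n_def Nc_def kc_def mc_def p_def mult_ac)
  have RB: "((-1) ^ k * exp (- 2 * pi * \<i> * of_nat k * u)
              * qpow \<tau> (- (real k * (real k - real N + 1)) / (2 * real N)))
         * ((-1) powi m * exp (- 2 * pi * \<i> * of_real (real_of_int m + 1/2)
               * (of_nat N * u + of_nat k * \<tau> - (of_nat N - 1) / 2 * \<tau> + (of_nat N + 1) / 2))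
            * exp (- pi * \<i> * of_real ((real_of_int m + 1/2)\<^sup>2) * (of_nat N * \<tau>)))
       = exp (kc*(p*\<i>) + (-2*p*\<i>*kc*u) + 2*p*\<i>*(-(kc*(kc-Nc+1))/(2*Nc))*\<tau> + mc*(p*\<i>)
     + (-2*p*\<i>*(mc+1/2)*(Nc*u + kc*\<tau> - (Nc-1)/2*\<tau> + (Nc+1)/2)) + (-p*\<i>*(mc+1/2)\<^sup>2*(Nc*\<tau>)))"
    unfolding i2 neg1_powi qpow_def exp_add
    by (simp add: Nc_def kc_def mc_def p_def mult_ac)
  have NM: "of_int (int N * m) = Nc * mc" by (simp add: Nc_def mc_def)
  have e: "(Nc+1) * (-(p*\<i>)/2) + (-p*\<i>*(Nc-1)*u) + 2*p*\<i>*((Nc-1)\<^sup>2/(8*Nc))*\<tau> + (Nc*mc+kc)*(p*\<i>)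
     + (-2*p*\<i>*(Nc*mc+kc+1/2)*u) + (-p*\<i>*(Nc*mc+kc+1/2)\<^sup>2*(\<tau>/Nc))
   = (kc*(p*\<i>) + (-2*p*\<i>*kc*u) + 2*p*\<i>*(-(kc*(kc-Nc+1))/(2*Nc))*\<tau> + mc*(p*\<i>)
     + (-2*p*\<i>*(mc+1/2)*(Nc*u + kc*\<tau> - (Nc-1)/2*\<tau> + (Nc+1)/2)) + (-p*\<i>*(mc+1/2)\<^sup>2*(Nc*\<tau>)))
     + \<i> * (of_int (int N * m) * (of_real pi * 2))"
    unfolding NM p_def[symmetric] by (rule expo_id[OF Nc])
  show ?thesis unfolding LA RB e exp_plus_2pin ..
qed

lemma key_real:
  fixes N k :: nat and m :: int and u \<tau> :: complex
  assumes N: "N \<ge> 1" and k: "k \<le> N - 1" and T: "0 < Im \<tau>"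
  defines "n \<equiv> int N * m + int k"
  shows "sgn (real_of_int n + 1/2) - Efun ((real_of_int n + 1/2 + Im u / Im (\<tau> / of_nat N)) * sqrt (2 * Im (\<tau> / of_nat N)))
   = sgn (real_of_int m + 1/2) - Efun ((real_of_int m + 1/2 + Im (of_nat N * u + of_nat k * \<tau> - (of_nat N - 1) / 2 * \<tau> + (of_nat N + 1) / 2) / Im (of_nat N * \<tau>)) * sqrt (2 * Im (of_nat N * \<tau>)))"
proof -
  define T where "T = Im \<tau>"
  have Tp: "0 < T" using T T_def by simp
  have Np: "0 < real N" using N by simp
  have sg: "sgn (real_of_int n + 1/2) = sgn (real_of_int m + 1/2)"
  proof (cases "0 \<le> m")
    case True
    then have "0 \<le> n" by (simp add: n_def)
    then show ?thesis using True by (simp add: sgn_if)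
  next
    case False
    then have "m \<le> -1" by simp
    then have "int N * m \<le> - int N" using N by (metis mult_left_mono mult_minus1_right of_nat_0_le_iff)
    then have "n \<le> -1" using k N by (simp add: n_def)
    then have "real_of_int n \<le> -1" by linarith
    then show ?thesis using False by (simp add: sgn_if)
  qed
  have i1: "Im (\<tau> / of_nat N) = T / real N" by (simp add: T_def)
  have i2: "Im (of_nat N * \<tau>) = real N * T" by (simp add: T_def)
  have i3: "Im (of_nat N * u + of_nat k * \<tau> - (of_nat N - 1) / 2 * \<tau> + (of_nat N + 1) / 2)
       = real N * Im u + real k * T - (real N - 1) / 2 * T"
    by (simp add: T_def)
  have sq: "sqrt (2 * (real N * T)) = real N * sqrt (2 * (T / real N))"
  proof -
    have "2 * (real N * T) = (real N)\<^sup>2 * (2 * (T / real N))" using Np by (simp add: field_simps power2_eq_square)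
    then have "sqrt (2 * (real N * T)) = sqrt ((real N)\<^sup>2) * sqrt (2 * (T / real N))"
      by (simp only: real_sqrt_mult)
    then show ?thesis using Np by simp
  qed
  have ar: "real_of_int m + 1/2 + (real N * Im u + real k * T - (real N - 1) / 2 * T) / (real N * T)
      = (real_of_int n + 1/2 + Im u / (T / real N)) / real N"
    using Np Tp by (simp add: n_def field_simps)
  show ?thesis unfolding i1 i2 i3 sq sg ar using Np by simp
qed

lemma swap_aux: "(c::complex) * X2 = P * X1 \<Longrightarrow> c * (r * X2) = P * (r * X1)"
  by (simp add: mult.left_commute)

theorem lemma3p5:
  fixes N :: nat and u \<tau> :: complex
  assumes "N \<ge> 1" and "Im \<tau> > 0"
  shows "(- \<i>) ^ (N + 1) * exp (- pi * \<i> * (of_nat N - 1) * u)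
           * qpow \<tau> ((real N - 1)\<^sup>2 / (8 * real N)) * Rfun u (\<tau> / of_nat N)
         = (\<Sum>k = 0..N - 1. (-1) ^ k * exp (- 2 * pi * \<i> * of_nat k * u)
              * qpow \<tau> (- (real k * (real k - real N + 1)) / (2 * real N))
              * Rfun (of_nat N * u + of_nat k * \<tau> - (of_nat N - 1) / 2 * \<tau> + (of_nat N + 1) / 2)
                     (of_nat N * \<tau>))"
proof -
  note N = assms(1) and T = assms(2)
  define P where "P = (- \<i>) ^ (N + 1) * exp (- pi * \<i> * (of_nat N - 1) * u)
           * qpow \<tau> ((real N - 1)\<^sup>2 / (8 * real N))"
  define c where "c k = (-1) ^ k * exp (- 2 * pi * \<i> * of_nat k * u)
              * qpow \<tau> (- (real k * (real k - real N + 1)) / (2 * real N))" for k :: nat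
  define wk where "wk k = of_nat N * u + of_nat k * \<tau> - (of_nat N - 1) / 2 * \<tau> + (of_nat N + 1) / 2" for k :: nat
  define g where "g n = P * rt u (\<tau> / of_nat N) n" for n
  have s1: "0 < Im (\<tau> / of_nat N)" using N T by simp
  have gs: "g summable_on UNIV"
    unfolding g_def by (rule summable_on_cmult_right[OF rt_summable[OF s1]])
  have key: "c k * rt (wk k) (of_nat N * \<tau>) m = g (int N * m + int k)" if k: "k \<le> N - 1" for k m
  proof -
    let ?n = "int N * m + int k"
    have R: "rt (wk k) (of_nat N * \<tau>) m =
       of_real (sgn (real_of_int m + 1/2) - Efun ((real_of_int m + 1/2 + Im (wk k) / Im (of_nat N * \<tau>)) * sqrt (2 * Im (of_nat N * \<tau>))))
       * ((-1) powi m * exp (- 2 * pi * \<i> * of_real (real_of_int m + 1/2) * wk k)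
            * exp (- pi * \<i> * of_real ((real_of_int m + 1/2)\<^sup>2) * (of_nat N * \<tau>)))"
      unfolding rt_def Let_def by (simp only: mult.assoc)
    have L: "rt u (\<tau> / of_nat N) ?n =
       of_real (sgn (real_of_int ?n + 1/2) - Efun ((real_of_int ?n + 1/2 + Im u / Im (\<tau> / of_nat N)) * sqrt (2 * Im (\<tau> / of_nat N))))
       * ((-1) powi ?n * exp (- 2 * pi * \<i> * of_real (real_of_int ?n + 1/2) * u)
            * exp (- pi * \<i> * of_real ((real_of_int ?n + 1/2)\<^sup>2) * (\<tau> / of_nat N)))"
      unfolding rt_def Let_def by (simp only: mult.assoc)
    have E: "c k * ((-1) powi m * exp (- 2 * pi * \<i> * of_real (real_of_int m + 1/2) * wk k)
            * exp (- pi * \<i> * of_real ((real_of_int m + 1/2)\<^sup>2) * (of_nat N * \<tau>)))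
         = P * ((-1) powi ?n * exp (- 2 * pi * \<i> * of_real (real_of_int ?n + 1/2) * u)
            * exp (- pi * \<i> * of_real ((real_of_int ?n + 1/2)\<^sup>2) * (\<tau> / of_nat N)))"
      unfolding c_def P_def wk_def by (rule sym, rule key_exp[OF N])
    show ?thesis unfolding g_def R L key_real[OF N k T, where m=m and u=u, folded wk_def]
      by (rule swap_aux[OF E])
  qed
  have LHS: "P * Rfun u (\<tau> / of_nat N) = infsum g UNIV"
    unfolding Rfun_rt g_def by (rule infsum_cmult_right'[symmetric])
  have RHS: "(\<Sum>k = 0..N - 1. c k * Rfun (wk k) (of_nat N * \<tau>))
        = (\<Sum>k = 0..N - 1. infsum (\<lambda>m. g (int N * m + int k)) UNIV)"
  proof (rule sum.cong)
    fix k assume "k \<in> {0..N - 1}"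
    then have k: "k \<le> N - 1" by simp
    show "c k * Rfun (wk k) (of_nat N * \<tau>) = infsum (\<lambda>m. g (int N * m + int k)) UNIV"
      unfolding Rfun_rt infsum_cmult_right'[symmetric] using key[OF k] by simp
  qed simp
  define A where "A = Sigma {0..N - 1} (\<lambda>_::nat. UNIV :: int set)"
  have bij: "bij_betw (\<lambda>(k, m). int N * m + int k) A UNIV"
  proof (rule bij_betw_byWitness[where f' = "\<lambda>n. (nat (n mod int N), n div int N)"])
    show "\<forall>a\<in>A. (\<lambda>n. (nat (n mod int N), n div int N)) ((\<lambda>(k, m). int N * m + int k) a) = a"
    proof
      fix a assume "a \<in> A"
      then obtain k m where a: "a = (k, m)" and k: "k \<le> N - 1" by (auto simp: A_def)
      have kN: "int k < int N" using k N by linarith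
      have "(int N * m + int k) mod int N = int k" using kN by simp
      moreover have "(int N * m + int k) div int N = m" using kN by simp
      ultimately show "(\<lambda>n. (nat (n mod int N), n div int N)) ((\<lambda>(k, m). int N * m + int k) a) = a"
        unfolding a by simp
    qed
    show "\<forall>a'\<in>UNIV. (\<lambda>(k, m). int N * m + int k) ((\<lambda>n. (nat (n mod int N), n div int N)) a') = a'"
    proof
      fix n :: int
      have "0 \<le> n mod int N" using N by simp
      then have "int (nat (n mod int N)) = n mod int N" by simp
      then show "(\<lambda>(k, m). int N * m + int k) ((\<lambda>n. (nat (n mod int N), n div int N)) n) = n"
        by (simp add: mult_div_mod_eq)
    qed
    show "(\<lambda>(k, m). int N * m + int k) ` A \<subseteq> UNIV" by simp
    show "(\<lambda>n. (nat (n mod int N), n div int N)) ` UNIV \<subseteq> A"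
    proof (clarsimp simp: A_def)
      fix n :: int
      have "n mod int N < int N" using N by simp
      then show "nat (n mod int N) \<le> N - Suc 0" by linarith
    qed
  qed
  have gsA: "(\<lambda>(k, m). g (int N * m + int k)) summable_on A"
    using summable_on_reindex_bij_betw[OF bij, of g] gs unfolding case_prod_unfold by blast
  have "(\<Sum>k = 0..N - 1. infsum (\<lambda>m. g (int N * m + int k)) UNIV)
       = infsum (\<lambda>k. infsum (\<lambda>m. g (int N * m + int k)) UNIV) {0..N - 1}"
    by (simp only: infsum_finite[OF finite_atLeastAtMost])
  also have "\<dots> = infsum (\<lambda>(k, m). g (int N * m + int k)) A"
    unfolding A_def by (rule infsum_Sigma'_banach[OF gsA[unfolded A_def]])
  also have "\<dots> = infsum g UNIV"
    using infsum_reindex_bij_betw[OF bij, of g] unfolding case_prod_unfold by blast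
  finally have calc: "(\<Sum>k = 0..N - 1. infsum (\<lambda>m. g (int N * m + int k)) UNIV) = infsum g UNIV" .
  have "P * Rfun u (\<tau> / of_nat N) = (\<Sum>k = 0..N - 1. c k * Rfun (wk k) (of_nat N * \<tau>))"
    unfolding LHS RHS calc ..
  then show ?thesis unfolding P_def c_def wk_def .
qed

end
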